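(* Let $u_1,\dots,u_n$ be words over $[n]$ with $u_j\in[n]^{k_j}$ ($k_j\geq0$). Then \[ P\left(\begin{bmatrix}e_{u_1}\\ \vdots\\ e_{u_n}\end{bmatrix}\right)=\sum_{j=1}^n\frac{\delta^l(l_{ju_j})[1\oplus\cdots\oplus1]}{k_j+1}, \] where $P$ is the orthogonal projection of $\mathcal{F}(\mathbb{C}^n)^n$ onto the closure of $\delta^l(\mathbb{C}^l_{\langle n\rangle})[1\oplus\cdots\oplus1]$ and $ju_j$ denotes the word obtained by prefixing the letter $j$ to $u_j$.
   Context: Let $\{e_1,\dots,e_n\}$ be an orthonormal basis of $\mathbb{C}^n$, $\{f_1,\dots,f_n\}$ the standard basis. The full Fock space is $\mathcal{F}(\mathbb{C}^n)=\mathbb{C}1\oplus\bigoplus_{k\geq1}(\mathbb{C}^n)^{\otimes k}$; for a word $w=i_1\cdots i_k$ over $[n]=\{1,\dots,n\}$, $e_w=e_{i_1}\otimes\cdots\otimes e_{i_k}$, $e_\epsilon=1$ for the empty word; $[n]^k$ is the set of words of length $k$. Let $l_je_w=e_{jw}$ be the left creation operators and $l_u=l_{u_1}\cdots l_{u_p}$ for $u=u_1\cdots u_p$. Let $\mathbb{C}^l_{\langle n\rangle}$ be the unital algebra generated by $l_1,\dots,l_n$, and $\delta^l:\mathbb{C}^l_{\langle n\rangle}\to(\mathbb{C}^l_{\langle n\rangle})^n\cong\mathbb{C}^l_{\langle n\rangle}\otimes\mathbb{C}^n$ the linear map with $\delta^l(l_{i_1}\cdots l_{i_p})=\sum_{j=1}^p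 l_{i_{j+1}}\cdots l_{i_p}l_{i_1}\cdots l_{i_{j-1}}\otimes f_{i_j}$. For a tuple $(x_1,\dots,x_n)$ of operators, $(x_1,\dots,x_n)[1\oplus\cdots\oplus1]=(x_11,\dots,x_n1)\in\mathcal{F}(\mathbb{C}^n)^n$, and $\delta^l(\mathbb{C}^l_{\langle n\rangle})[1\oplus\cdots\oplus1]$ is the set of all such images of $\delta^l(q)$, $q\in\mathbb{C}^l_{\langle n\rangle}$. Vectors of $\mathcal{F}(\mathbb{C}^n)^n$ are identified with $\mathcal{F}(\mathbb{C}^n)\otimes\mathbb{C}^n$ via $(\xi_1,\dots,\xi_n)\mapsto\sum_j\xi_j\otimes f_j$. *)

theory Defs
  imports "HOL-Analysis.Analysis"
begin

text \<open>Model of F(C^n)^n = F(C^n) (x) C^n: a vector is a function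
  x :: nat list => nat => complex, where x w j is the coefficient of e_w (x) f_j.
  Letters and components range over {1..n}.\<close>

definition words :: "nat \<Rightarrow> nat list set" where
  "words n = {w. set w \<subseteq> {1..n}}"

definition lp2 :: "nat \<Rightarrow> (nat list \<Rightarrow> nat \<Rightarrow> complex) set" where
  "lp2 n = {x. (\<forall>w j. x w j \<noteq> 0 \<longrightarrow> w \<in> words n \<and> j \<in> {1..n}) \<and>
              (\<lambda>(w, j). (cmod (x w j))\<^sup>2) summable_on UNIV}"

definition l2inner :: "(nat list \<Rightarrow> nat \<Rightarrow> complex) \<Rightarrow> (nat list \<Rightarrow> nat \<Rightarrow> complex) \<Rightarrow> complex" where
  "l2inner x y = infsum (\<lambda>(w, j). cnj (x w j) * y w j) UNIV"

definition l2norm :: "(nat list \<Rightarrow> nat \<Rightarrow> complex) \<Rightarrow> real" where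
  "l2norm x = sqrt (infsum (\<lambda>(w, j). (cmod (x w j))\<^sup>2) UNIV)"

definition l2closure :: "nat \<Rightarrow> (nat list \<Rightarrow> nat \<Rightarrow> complex) set \<Rightarrow> (nat list \<Rightarrow> nat \<Rightarrow> complex) set" where
  "l2closure n M = {x \<in> lp2 n. \<forall>\<epsilon>>0. \<exists>m\<in>M. l2norm (\<lambda>w j. x w j - m w j) < \<epsilon>}"

definition orth_proj :: "nat \<Rightarrow> (nat list \<Rightarrow> nat \<Rightarrow> complex) set \<Rightarrow> (nat list \<Rightarrow> nat \<Rightarrow> complex)
    \<Rightarrow> (nat list \<Rightarrow> nat \<Rightarrow> complex)" where
  "orth_proj n M v = (THE p. p \<in> l2closure n M \<and>
      (\<forall>m\<in>l2closure n M. l2inner m (\<lambda>w j. v w j - p w j) = 0))"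

definition basis_vec :: "nat list \<Rightarrow> nat \<Rightarrow> (nat list \<Rightarrow> nat \<Rightarrow> complex)" where
  "basis_vec w j = (\<lambda>v i. if v = w \<and> i = j then 1 else 0)"

text \<open>delta^l(l_{i_1}...l_{i_p})[1 (+) ... (+) 1]
  = sum_j e_{i_{j+1}...i_p i_1...i_{j-1}} (x) f_{i_j}  (0-based position j here).\<close>
definition delta_vec :: "nat list \<Rightarrow> (nat list \<Rightarrow> nat \<Rightarrow> complex)" where
  "delta_vec u = (\<lambda>w i. \<Sum>j<length u. basis_vec (drop (Suc j) u @ take j u) (u ! j) w i)"

text \<open>delta^l(C^l_<n>)[1 (+) ... (+) 1]: image of all noncommutative polynomials
  q = sum_u c_u l_u in the creation operators, i.e. the complex span of the delta_vec u.\<close>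
definition delta_image :: "nat \<Rightarrow> (nat list \<Rightarrow> nat \<Rightarrow> complex) set" where
  "delta_image n = {x. \<exists>U c. finite U \<and> U \<subseteq> words n \<and>
       x = (\<lambda>w i. \<Sum>u\<in>U. c u * delta_vec u w i)}"

end

theory Submission
  imports Defs
begin

definition pos :: "nat \<Rightarrow> nat list \<Rightarrow> nat list \<times> nat" where
  "pos a u = (drop (Suc a) u @ take a u, u ! a)"

lemma dv_eq: "delta_vec u w i = (\<Sum>a<length u. if (w,i) = pos a u then 1 else 0)"
  unfolding delta_vec_def basis_vec_def pos_def by (intro sum.cong) auto

lemma pos_rot: "a < length u \<Longrightarrow> snd (pos a u) # fst (pos a u) = rotate a u"
  unfolding pos_def by (simp add: rotate_drop_take Cons_nth_drop_Suc)

lemma pos_eq: "a < length u \<Longrightarrow> ((w,i) = pos a u) = (i # w = rotate a u)"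
proof -
  assume a: "a < length u"
  obtain p q where e: "pos a u = (p,q)" by (cases "pos a u")
  have "rotate a u = q # p" using pos_rot[OF a] e by simp
  then show ?thesis using e by auto
qed

lemma rot_inj: "rotate b xs = rotate b ys \<Longrightarrow> xs = ys"
proof (induction b arbitrary: xs ys)
  case 0 then show ?case by simp
next
  case (Suc b)
  have "rotate (Suc b) xs = rotate b (rotate1 xs)" "rotate (Suc b) ys = rotate b (rotate1 ys)"
    by (simp_all add: rotate_def funpow_swap1)
  then have "rotate1 xs = rotate1 ys" using Suc by metis
  then show ?case using inj_rotate1 by (meson injD)
qed

lemma rot_shift:
  fixes f :: "'a list \<Rightarrow> complex"
  shows "(\<Sum>a<length u. f (rotate (a + c) u)) = (\<Sum>a<length u. f (rotate a u))"
proof (induction c)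
  case 0 then show ?case by simp
next
  case (Suc c)
  define g where "g a = f (rotate (a + c) u)" for a
  have "rotate (length u + c) u = rotate ((length u + c) mod length u) u" by (rule rotate_conv_mod)
  also have "\<dots> = rotate (c mod length u) u" by simp
  also have "\<dots> = rotate c u" by (rule rotate_conv_mod[symmetric])
  finally have gp: "g (length u) = g 0" unfolding g_def by (simp add: add.commute)
  have "(\<Sum>a<length u. f (rotate (a + Suc c) u)) = (\<Sum>a<length u. g (Suc a))"
    unfolding g_def by simp
  also have "\<dots> = (\<Sum>a<Suc (length u). g a) - g 0"
    by (subst sum.lessThan_Suc_shift) simp
  also have "\<dots> = (\<Sum>a<length u. g a)" using gp by simp
  finally show ?case using Suc unfolding g_def by simp
qed

lemma K: "(\<Sum>a<length u. (if rotate a u = rotate b x then 1 else 0)::complex)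
        = (\<Sum>a<length u. if rotate a u = x then 1 else 0)"
proof -
  have "(\<Sum>a<length u. (if rotate a u = x then 1 else 0)::complex)
     = (\<Sum>a<length u. if rotate (a + b) u = rotate b x then 1 else 0)"
  proof (intro sum.cong refl)
    fix a
    have "rotate (a + b) u = rotate b (rotate a u)" by (simp add: rotate_rotate add.commute)
    then show "(if rotate a u = x then 1 else 0::complex) = (if rotate (a + b) u = rotate b x then 1 else 0)"
      using rot_inj by metis
  qed
  also have "\<dots> = (\<Sum>a<length u. if rotate a u = rotate b x then 1 else 0)"
    by (rule rot_shift[of "\<lambda>y. if y = rotate b x then 1 else 0"])
  finally show ?thesis by simp
qed

lemma dv_pos: "a < length u \<Longrightarrow> delta_vec x (fst (pos a u)) (snd (pos a u))
   = (\<Sum>b<length x. if rotate b x = rotate a u then 1 else 0)"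
  unfolding dv_eq
proof (intro sum.cong refl)
  fix b assume "a < length u" "b \<in> {..<length x}"
  then show "(if (fst (pos a u), snd (pos a u)) = pos b x then 1 else 0 :: complex) =
     (if rotate b x = rotate a u then 1 else 0)"
  proof -
    have "((fst (pos a u), snd (pos a u)) = pos b x) = (rotate a u = rotate b x)"
      using pos_eq[of b x "fst (pos a u)" "snd (pos a u)"] pos_rot[of a u] \<open>a < length u\<close>
        \<open>b \<in> {..<length x}\<close> by simp
    then show ?thesis by auto
  qed
qed

lemma dv_inv: "a < length u \<Longrightarrow> delta_vec x (fst (pos a u)) (snd (pos a u))
   = delta_vec x (fst (pos 0 u)) (snd (pos 0 u))"
proof -
  assume a: "a < length u"
  then have "u \<noteq> []" by auto
  then show ?thesis using a dv_pos[of a u x] dv_pos[of 0 u x] K[of x a u] K[of x 0 u] by simp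
qed


lemma hs_single: "((\<lambda>s. if s = p then c else 0) has_sum c) UNIV"
  by (rule has_sum_finite_neutralI[of "{p}"]) auto

lemma hs_sum:
  fixes f :: "'i \<Rightarrow> 'a \<Rightarrow> 'b::topological_comm_monoid_add"
  shows "finite A \<Longrightarrow> (\<And>a. a \<in> A \<Longrightarrow> (f a has_sum c a) S)
   \<Longrightarrow> ((\<lambda>x. \<Sum>a\<in>A. f a x) has_sum (\<Sum>a\<in>A. c a)) S"
proof (induction A rule: finite_induct)
  case empty then show ?case by simp
next
  case (insert a A)
  have "((\<lambda>x. f a x + (\<Sum>a\<in>A. f a x)) has_sum (c a + (\<Sum>a\<in>A. c a))) S"
    by (rule has_sum_add) (use insert in auto)
  then show ?case using insert by simp
qed

lemma fs_summable: "finite B \<Longrightarrow> (\<And>s. s \<notin> B \<Longrightarrow> f s = 0) \<Longrightarrow> f summable_on UNIV"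
  unfolding summable_on_def using has_sum_finite_neutralI[of B UNIV f] by auto

lemma ptbound:
  assumes "(\<lambda>(w,j). (cmod (y w j))\<^sup>2) summable_on UNIV"
  shows "cmod (y w j) \<le> l2norm y"
proof -
  have "infsum (\<lambda>(w,j). (cmod (y w j))\<^sup>2) {(w,j)} \<le> infsum (\<lambda>(w,j). (cmod (y w j))\<^sup>2) UNIV"
    by (rule infsum_mono_neutral) (use assms in auto)
  then have "(cmod (y w j))\<^sup>2 \<le> infsum (\<lambda>(w,j). (cmod (y w j))\<^sup>2) UNIV" by simp
  then show ?thesis unfolding l2norm_def by (rule real_le_rsqrt)
qed

lemma pos_words: "u \<in> words n \<Longrightarrow> a < length u \<Longrightarrow> fst (pos a u) \<in> words n \<and> snd (pos a u) \<in> {1..n}"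
  unfolding words_def pos_def
  by (auto dest: in_set_dropD in_set_takeD nth_mem)

lemma lp2_I:
  assumes "finite W" "W \<subseteq> words n"
    and "\<And>w i. x w i \<noteq> 0 \<Longrightarrow> \<exists>u\<in>W. \<exists>a<length u. (w,i) = pos a u"
  shows "x \<in> lp2 n"
proof -
  let ?B = "\<Union>u\<in>W. (\<lambda>a. pos a u) ` {..<length u}"
  have fin: "finite ?B" using assms(1) by auto
  have "(\<lambda>(w, j). (cmod (x w j))\<^sup>2) summable_on UNIV"
  proof (rule fs_summable[of ?B])
    show "finite ?B" by (rule fin)
    fix s assume s: "s \<notin> ?B"
    obtain w j where sw: "s = (w,j)" by (cases s)
    have "x w j = 0"
    proof (rule ccontr)
      assume "x w j \<noteq> 0"
      then obtain u a where "u \<in> W" "a < length u" "(w,j) = pos a u" using assms(3) by blast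
      then show False using s sw by auto
    qed
    then show "(case s of (w, j) \<Rightarrow> (cmod (x w j))\<^sup>2) = 0" using sw by simp
  qed
  moreover have "x w j \<noteq> 0 \<longrightarrow> w \<in> words n \<and> j \<in> {1..n}" for w j
  proof
    assume "x w j \<noteq> 0"
    then obtain u a where "u \<in> W" "a < length u" "(w,j) = pos a u" using assms(3) by blast
    then show "w \<in> words n \<and> j \<in> {1..n}" using pos_words[of u n a] assms(2)
      by (metis fst_conv snd_conv subsetD)
  qed
  ultimately show ?thesis unfolding lp2_def by auto
qed

lemma closure_I: "x \<in> lp2 n \<Longrightarrow> x \<in> M \<Longrightarrow> x \<in> l2closure n M"
  unfolding l2closure_def by (auto intro!: bexI[of _ x] simp: l2norm_def case_prod_unfold)

lemma dv_support: "delta_vec u w i \<noteq> 0 \<Longrightarrow> \<exists>a<length u. (w,i) = pos a u"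
proof (rule ccontr)
  assume a: "delta_vec u w i \<noteq> 0" "\<not> (\<exists>a<length u. (w,i) = pos a u)"
  then have "(\<Sum>a<length u. if (w,i) = pos a u then 1 else 0::complex) = 0"
    by (intro sum.neutral) auto
  then show False using a(1) unfolding dv_eq by simp
qed

lemma dv_closure: "u \<in> words n \<Longrightarrow> delta_vec u \<in> l2closure n (delta_image n)"
proof (rule closure_I)
  assume u: "u \<in> words n"
  show "delta_vec u \<in> lp2 n"
    by (rule lp2_I[of "{u}"]) (use u dv_support in auto)
  show "delta_vec u \<in> delta_image n"
    unfolding delta_image_def
    by (rule CollectI, rule exI[of _ "{u}"], rule exI[of _ "\<lambda>_. 1"]) (use u in auto)
qed

lemma D_support:
  assumes "m \<in> delta_image n"
  shows "\<exists>B. finite B \<and> (\<forall>t::nat list \<times> nat. t \<notin> B \<longrightarrow> m (fst t) (snd t) = 0)"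
proof -
  obtain U c where U: "finite U" "m = (\<lambda>w i. \<Sum>u\<in>U. c u * delta_vec u w i)"
    using assms unfolding delta_image_def by blast
  let ?B = "\<Union>u\<in>U. (\<lambda>a. pos a u) ` {..<length u}"
  have "m (fst s) (snd s) = 0" if "s \<notin> ?B" for s :: "nat list \<times> nat"
  proof (cases s)
    case (Pair w j)
    have "delta_vec u w j = 0" if "u \<in> U" for u
      using dv_support[of u w j] \<open>s \<notin> ?B\<close> Pair that by auto
    then show ?thesis using U Pair by simp
  qed
  then show ?thesis using U(1) by (intro exI[of _ ?B]) auto
qed

lemma D_inv:
  assumes "m \<in> delta_image n" "a < length u"
  shows "m (fst (pos a u)) (snd (pos a u)) = m (fst (pos 0 u)) (snd (pos 0 u))"
proof -
  obtain U c where U: "finite U" "m = (\<lambda>w i. \<Sum>u\<in>U. c u * delta_vec u w i)"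
    using assms unfolding delta_image_def by blast
  show ?thesis unfolding U(2) using dv_inv[OF assms(2)] by simp
qed

lemma sq_ineq: "(cmod (a - b))\<^sup>2 \<le> 2 * (cmod a)\<^sup>2 + 2 * (cmod b)\<^sup>2"
proof -
  have "cmod (a - b) \<le> cmod a + cmod b" by (rule norm_triangle_ineq4)
  then have "(cmod (a - b))\<^sup>2 \<le> (cmod a + cmod b)\<^sup>2" by (simp add: power_mono)
  also have "\<dots> \<le> 2 * (cmod a)\<^sup>2 + 2 * (cmod b)\<^sup>2"
    by (smt (verit) power2_sum sum_squares_ge_zero power2_diff zero_le_power2)
  finally show ?thesis .
qed

lemma diff_summable:
  assumes "p \<in> lp2 n" "m \<in> delta_image n"
  shows "(\<lambda>(w,j). (cmod (p w j - m w j))\<^sup>2) summable_on UNIV"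
proof -
  obtain B where B: "finite B" "\<forall>t::nat list \<times> nat. t \<notin> B \<longrightarrow> m (fst t) (snd t) = 0"
    using D_support[OF assms(2)] by blast
  have s1: "(\<lambda>(w,j). (cmod (p w j))\<^sup>2) summable_on UNIV" using assms(1) unfolding lp2_def by auto
  have s2: "(\<lambda>(w,j). (cmod (m w j))\<^sup>2) summable_on UNIV"
    by (rule fs_summable[OF B(1)]) (use B(2) in \<open>auto simp: case_prod_unfold\<close>)
  have "(\<lambda>s. 2 * (case s of (w,j) \<Rightarrow> (cmod (p w j))\<^sup>2) + 2 * (case s of (w,j) \<Rightarrow> (cmod (m w j))\<^sup>2))
     summable_on UNIV"
    by (intro summable_on_add summable_on_cmult_right s1 s2)
  then show ?thesis
    by (rule summable_on_comparison_test) (auto simp: sq_ineq)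
qed

lemma cl_inv:
  assumes "p \<in> l2closure n (delta_image n)" "a < length u"
  shows "p (fst (pos a u)) (snd (pos a u)) = p (fst (pos 0 u)) (snd (pos 0 u))"
proof (rule ccontr)
  define z where "z = p (fst (pos a u)) (snd (pos a u)) - p (fst (pos 0 u)) (snd (pos 0 u))"
  assume "\<not> ?thesis"
  then have zp: "cmod z > 0" unfolding z_def by simp
  then have e: "cmod z / 3 > 0" by simp
  have cl: "\<forall>\<epsilon>>0. \<exists>m\<in>delta_image n. l2norm (\<lambda>w j. p w j - m w j) < \<epsilon>"
    and pl: "p \<in> lp2 n" using assms(1) unfolding l2closure_def by blast+
  obtain m where m: "m \<in> delta_image n" "l2norm (\<lambda>w j. p w j - m w j) < cmod z / 3"
    using cl e by blast
  define y where "y = (\<lambda>w j. p w j - m w j)"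
  have sy: "(\<lambda>(w,j). (cmod (y w j))\<^sup>2) summable_on UNIV" unfolding y_def by (rule diff_summable[OF pl m(1)])
  have ny: "l2norm y < cmod z / 3" using m(2) unfolding y_def .
  have b1: "cmod (y (fst (pos a u)) (snd (pos a u))) < cmod z / 3"
    using ptbound[of y, OF sy] ny by (rule le_less_trans)
  have b2: "cmod (y (fst (pos 0 u)) (snd (pos 0 u))) < cmod z / 3"
    using ptbound[of y, OF sy] ny by (rule le_less_trans)
  have "z = y (fst (pos a u)) (snd (pos a u)) - y (fst (pos 0 u)) (snd (pos 0 u))"
    using D_inv[OF m(1) assms(2)] unfolding z_def y_def by simp
  then have "cmod z \<le> cmod (y (fst (pos a u)) (snd (pos a u))) + cmod (y (fst (pos 0 u)) (snd (pos 0 u)))"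
    using norm_triangle_ineq4 by simp
  then show False using b1 b2 zp by linarith
qed

lemma inner_dv: "l2inner (delta_vec u) f = (\<Sum>a<length u. f (fst (pos a u)) (snd (pos a u)))"
proof -
  have eq: "(\<lambda>(w,j). cnj (delta_vec u w j) * f w j)
     = (\<lambda>s. \<Sum>a<length u. if s = pos a u then f (fst (pos a u)) (snd (pos a u)) else 0)"
  proof
    fix s show "(case s of (w,j) \<Rightarrow> cnj (delta_vec u w j) * f w j)
     = (\<Sum>a<length u. if s = pos a u then f (fst (pos a u)) (snd (pos a u)) else 0)"
      by (cases s) (auto simp: dv_eq sum_distrib_right intro!: sum.cong; metis fst_conv snd_conv)
  qed
  have "((\<lambda>s. \<Sum>a<length u. if s = pos a u then f (fst (pos a u)) (snd (pos a u)) else 0)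
     has_sum (\<Sum>a<length u. f (fst (pos a u)) (snd (pos a u)))) UNIV"
    by (rule hs_sum) (auto intro: hs_single)
  then show ?thesis unfolding l2inner_def eq by (rule infsumI)
qed


lemma uniq_val:
  assumes "p \<in> l2closure n (delta_image n)"
    and "\<forall>m\<in>l2closure n (delta_image n). l2inner m (\<lambda>w j. v w j - p w j) = 0"
    and "u \<in> words n" "u \<noteq> []"
  shows "of_nat (length u) * p (fst (pos 0 u)) (snd (pos 0 u))
       = (\<Sum>a<length u. v (fst (pos a u)) (snd (pos a u)))"
proof -
  have "0 = l2inner (delta_vec u) (\<lambda>w j. v w j - p w j)"
    using assms(2) dv_closure[OF assms(3)] by auto
  also have "\<dots> = (\<Sum>a<length u. v (fst (pos a u)) (snd (pos a u))) - (\<Sum>a<length u. p (fst (pos a u)) (snd (pos a u)))"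
    by (simp add: inner_dv sum_subtractf)
  also have "(\<Sum>a<length u. p (fst (pos a u)) (snd (pos a u))) = (\<Sum>a<length u. p (fst (pos 0 u)) (snd (pos 0 u)))"
    by (rule sum.cong) (use cl_inv[OF assms(1)] in auto)
  finally show ?thesis by simp
qed

lemma uniq:
  assumes "p \<in> l2closure n (delta_image n)"
    and "\<forall>m\<in>l2closure n (delta_image n). l2inner m (\<lambda>w j. v w j - p w j) = 0"
    and "p' \<in> l2closure n (delta_image n)"
    and "\<forall>m\<in>l2closure n (delta_image n). l2inner m (\<lambda>w j. v w j - p' w j) = 0"
  shows "p = p'"
proof (intro ext)
  fix w i
  show "p w i = p' w i"
  proof (cases "w \<in> words n \<and> i \<in> {1..n}")
    case True
    then have u: "i # w \<in> words n" unfolding words_def by auto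
    have p0: "pos 0 (i # w) = (w, i)" unfolding pos_def by simp
    have "of_nat (length (i # w)) * p w i = of_nat (length (i # w)) * p' w i"
      using uniq_val[OF assms(1,2) u] uniq_val[OF assms(3,4) u] p0 by simp
    then show ?thesis by (simp del: of_nat_Suc)
  next
    case False
    have "p \<in> lp2 n" "p' \<in> lp2 n" using assms(1,3) unfolding l2closure_def by auto
    then have "p w i = 0" "p' w i = 0" using False unfolding lp2_def by auto
    then show ?thesis by simp
  qed
qed


theorem corollary3p4:
  fixes n :: nat and us :: "nat \<Rightarrow> nat list"
  assumes "n \<ge> 1"
    and "\<And>j. j \<in> {1..n} \<Longrightarrow> us j \<in> words n"
  shows "orth_proj n (delta_image n)
           (\<lambda>w j. if j \<in> {1..n} \<and> w = us j then 1 else 0)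
         = (\<lambda>w i. \<Sum>j=1..n. delta_vec (j # us j) w i / of_nat (length (us j) + 1))"
proof -
  define v :: "nat list \<Rightarrow> nat \<Rightarrow> complex" where "v = (\<lambda>w j. if j \<in> {1..n} \<and> w = us j then 1 else 0)"
  define q :: "nat list \<Rightarrow> nat \<Rightarrow> complex" where
    "q = (\<lambda>w i. \<Sum>j=1..n. delta_vec (j # us j) w i / of_nat (length (us j) + 1))"
  define x where "x j = j # us j" for j
  define L :: "nat \<Rightarrow> complex" where "L j = of_nat (length (us j) + 1)" for j
  define D where "D = delta_image n"
  have xw: "x j \<in> words n" if "j \<in> {1..n}" for j
    using assms(2)[OF that] that unfolding x_def words_def by auto
  have lx: "length (x j) = length (us j) + 1" for j unfolding x_def by simp
  have p0: "pos 0 (x j) = (us j, j)" for j unfolding pos_def x_def by simp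
  have injx: "inj_on x {1..n}" unfolding inj_on_def x_def by auto
  have qlp: "q \<in> lp2 n"
  proof (rule lp2_I[of "x ` {1..n}"])
    show "finite (x ` {1..n})" by simp
    show "x ` {1..n} \<subseteq> words n" using xw by auto
    fix w i assume "q w i \<noteq> 0"
    then obtain j where j: "j \<in> {1..n}" "delta_vec (x j) w i / L j \<noteq> 0"
      unfolding q_def x_def L_def by (meson sum.not_neutral_contains_not_neutral)
    then have "delta_vec (x j) w i \<noteq> 0" by auto
    then show "\<exists>u\<in>x ` {1..n}. \<exists>a<length u. (w, i) = pos a u" using dv_support j(1) by blast
  qed
  have qD: "q \<in> D"
    unfolding D_def delta_image_def
  proof (intro CollectI exI conjI)
    show "finite (x ` {1..n})" by simp
    show "x ` {1..n} \<subseteq> words n" using xw by auto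
    show "q = (\<lambda>w i. \<Sum>u\<in>x ` {1..n}. (\<lambda>u. 1 / of_nat (length u)) u * delta_vec u w i)"
    proof (intro ext)
      fix w i
      have "(\<Sum>u\<in>x ` {1..n}. (\<lambda>u. 1 / of_nat (length u)) u * delta_vec u w i)
          = (\<Sum>j\<in>{1..n}. 1 / of_nat (length (x j)) * delta_vec (x j) w i)"
        using sum.reindex[OF injx, of "\<lambda>u. 1 / of_nat (length u) * delta_vec u w i"] by simp
      also have "\<dots> = q w i" unfolding q_def lx by (simp add: x_def)
      finally show "q w i = (\<Sum>u\<in>x ` {1..n}. (\<lambda>u. 1 / of_nat (length u)) u * delta_vec u w i)" by simp
    qed
  qed
  have qcl: "q \<in> l2closure n D" unfolding D_def by (rule closure_I[OF qlp qD[unfolded D_def]])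
  have orth: "l2inner m (\<lambda>w j. v w j - q w j) = 0" if m: "m \<in> l2closure n D" for m
  proof -
    define cm where "cm j = cnj (m (us j) j)" for j
    have mi: "m (fst (pos b (x j))) (snd (pos b (x j))) = m (us j) j" if "b < length (x j)" for b j
      using cl_inv[OF m[unfolded D_def] that] p0[of j] by simp
    have vs: "v w i = (\<Sum>j\<in>{1..n}. if (w,i) = (us j, j) then 1 else 0)" for w i
    proof -
      have "(\<Sum>j\<in>{1..n}. if (w,i) = (us j, j) then 1 else 0::complex)
          = (\<Sum>j\<in>{1..n}. if j = i then (if w = us i then 1 else 0) else 0)"
        by (rule sum.cong) auto
      then show ?thesis unfolding v_def by simp
    qed
    have qs: "q w i = (\<Sum>j\<in>{1..n}. \<Sum>b<length (x j). if (w,i) = pos b (x j) then 1 / L j else 0)" for w i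
    proof -
      have "q w i = (\<Sum>j\<in>{1..n}. (\<Sum>b<length (x j). if (w,i) = pos b (x j) then 1 else 0) / L j)"
        unfolding q_def dv_eq L_def x_def by (rule refl)
      also have "\<dots> = (\<Sum>j\<in>{1..n}. \<Sum>b<length (x j). if (w,i) = pos b (x j) then 1 / L j else 0)"
      proof (intro sum.cong refl)
        fix j show "(\<Sum>b<length (x j). if (w,i) = pos b (x j) then 1 else 0) / L j
           = (\<Sum>b<length (x j). if (w,i) = pos b (x j) then 1 / L j else 0)"
          unfolding sum_divide_distrib by (intro sum.cong refl) simp
      qed
      finally show ?thesis .
    qed
    have eq: "(\<lambda>(w,i). cnj (m w i) * (v w i - q w i))
       = (\<lambda>s. \<Sum>j\<in>{1..n}. (if s = (us j, j) then cm j else 0) +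
             (-1) * (\<Sum>b<length (x j). if s = pos b (x j) then cm j / L j else 0))"
    proof
      fix s :: "nat list \<times> nat"
      obtain w i where s: "s = (w,i)" by (cases s)
      have "cnj (m w i) * (v w i - q w i) = (\<Sum>j\<in>{1..n}. cnj (m w i) * (if (w,i) = (us j, j) then 1 else 0) +
             (-1) * (\<Sum>b<length (x j). cnj (m w i) * (if (w,i) = pos b (x j) then 1 / L j else 0)))"
        unfolding vs qs by (simp add: sum_distrib_left sum_subtractf ring_distribs sum.distrib sum_negf)
      also have "\<dots> = (\<Sum>j\<in>{1..n}. (if (w,i) = (us j, j) then cm j else 0) +
             (-1) * (\<Sum>b<length (x j). if (w,i) = pos b (x j) then cm j / L j else 0))"
      proof (intro sum.cong refl arg_cong2[where f = "(+)"] arg_cong2[where f = "(*)"])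
        fix j show "cnj (m w i) * (if (w,i) = (us j, j) then 1 else 0) = (if (w,i) = (us j, j) then cm j else 0)"
          unfolding cm_def by auto
        fix b assume "b \<in> {..<length (x j)}"
        then show "cnj (m w i) * (if (w,i) = pos b (x j) then 1 / L j else 0) = (if (w,i) = pos b (x j) then cm j / L j else 0)"
          using mi[of b j] unfolding cm_def by (auto simp: divide_inverse) (metis fst_conv snd_conv)+
      qed
      finally show "(case s of (w,i) \<Rightarrow> cnj (m w i) * (v w i - q w i)) = (\<Sum>j\<in>{1..n}. (if s = (us j, j) then cm j else 0) +
             (-1) * (\<Sum>b<length (x j). if s = pos b (x j) then cm j / L j else 0))"
        using s by simp
    qed
    have "((\<lambda>s. \<Sum>j\<in>{1..n}. (if s = (us j, j) then cm j else 0) +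
             (-1) * (\<Sum>b<length (x j). if s = pos b (x j) then cm j / L j else 0))
          has_sum (\<Sum>j\<in>{1..n}. cm j + (-1) * (\<Sum>b<length (x j). cm j / L j))) UNIV"
      by (intro hs_sum has_sum_add has_sum_cmult_right hs_single finite_atLeastAtMost finite_lessThan)
    moreover have "(\<Sum>j\<in>{1..n}. cm j + (-1) * (\<Sum>b<length (x j). cm j / L j)) = 0"
    proof (rule sum.neutral, intro ballI)
      fix j
      have nz: "L j \<noteq> 0" unfolding L_def by (metis of_nat_eq_0_iff add_is_0 one_neq_zero)
      have "length (x j) = length (us j) + 1" by (rule lx)
      then have "(\<Sum>b<length (x j). cm j / L j) = L j * (cm j / L j)" unfolding L_def by simp
      also have "\<dots> = cm j" using nz by simp
      finally show "cm j + (-1) * (\<Sum>b<length (x j). cm j / L j) = 0" by simp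
    qed
    ultimately show ?thesis unfolding l2inner_def eq by (simp add: infsumI)
  qed
  have Pq: "q \<in> l2closure n D \<and> (\<forall>m\<in>l2closure n D. l2inner m (\<lambda>w j. v w j - q w j) = 0)"
    using qcl orth by blast
  have "orth_proj n D v = q"
    unfolding orth_proj_def
  proof (rule the_equality)
    show "q \<in> l2closure n D \<and> (\<forall>m\<in>l2closure n D. l2inner m (\<lambda>w j. v w j - q w j) = 0)" by (rule Pq)
    fix p assume "p \<in> l2closure n D \<and> (\<forall>m\<in>l2closure n D. l2inner m (\<lambda>w j. v w j - p w j) = 0)"
    then show "p = q" using uniq[of p n v q] Pq unfolding D_def by blast
  qed
  then show ?thesis unfolding v_def q_def D_def .
qed

end
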